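(* Let $\varphi_0\in\mathbb{R}$ and let $v$ be a smooth function with $v(\varphi)>0$ and $v'(\varphi)>0$ for all $\varphi\ge\varphi_0$. Let $h_1,h_2$ be two solutions of $h'=\sqrt{h^2-v}$ in the region $\{(\varphi,h):\varphi\ge\varphi_0,\ h>\sqrt{v(\varphi)}\}$ with $h_2(\varphi_0)>h_1(\varphi_0)$, and set $\mathfrak{h}_i(\varphi)=h_i(\varphi)/\sqrt{v(\varphi)}$, $i=1,2$. Then, for all $\varphi$ at which both are defined, $$\mathfrak{h}_2(\varphi)>\mathfrak{h}_1(\varphi)\quad(\varphi\ge\varphi_0),$$ and $$\frac{\mathfrak{h}_2(\varphi)}{\mathfrak{h}_1(\varphi)}>\frac{\mathfrak{h}_2(\varphi')}{\mathfrak{h}_1(\varphi')}\quad\text{for all }\varphi>\varphi'>\varphi_0.$$ *)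

theory Defs
  imports "HOL-Analysis.Analysis"
begin

definition smooth_on :: "real set \<Rightarrow> (real \<Rightarrow> real) \<Rightarrow> bool" where
  "smooth_on U f \<longleftrightarrow> (\<forall>n. \<forall>x\<in>U. ((deriv ^^ n) f) differentiable (at x))"

end

theory Submission
  imports Defs
begin

lemma key_ineq:
  fixes a b w :: real
  assumes "w > 0" "a > sqrt w" "b > sqrt w" "b > a"
  shows "sqrt (b\<^sup>2 - w) * a - b * sqrt (a\<^sup>2 - w) > 0"
proof -
  have a0: "a > 0" using assms by (meson le_less_trans real_sqrt_ge_zero less_imp_le)
  have b0: "b > 0" using a0 assms by linarith
  have "sqrt w ^ 2 = w" using assms by simp
  hence aw: "a\<^sup>2 > w" and bw: "b\<^sup>2 > w"
    using assms power_strict_mono[of "sqrt w" a 2] power_strict_mono[of "sqrt w" b 2]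
    by auto
  have "b\<^sup>2 * (a\<^sup>2 - w) < (b\<^sup>2 - w) * a\<^sup>2"
  proof -
    have "a\<^sup>2 < b\<^sup>2" using a0 assms power_strict_mono[of a b 2] by auto
    hence "a\<^sup>2 * w < b\<^sup>2 * w" using assms by simp
    thus ?thesis by (simp add: algebra_simps)
  qed
  hence "sqrt (b\<^sup>2 * (a\<^sup>2 - w)) < sqrt ((b\<^sup>2 - w) * a\<^sup>2)" by simp
  moreover have "sqrt (b\<^sup>2 * (a\<^sup>2 - w)) = b * sqrt (a\<^sup>2 - w)"
    using b0 by (simp add: real_sqrt_mult)
  moreover have "sqrt ((b\<^sup>2 - w) * a\<^sup>2) = sqrt (b\<^sup>2 - w) * a"
    using a0 by (simp add: real_sqrt_mult)
  ultimately show ?thesis by simp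
qed

lemma ivl_sub:
  assumes "is_interval (I::real set)" "a \<in> I" "b \<in> I"
  shows "{a..b} \<subseteq> I"
proof
  fix x assume "x \<in> {a..b}"
  hence "a \<le> x" "x \<le> b" by auto
  thus "x \<in> I" using assms unfolding is_interval_1 by blast
qed

lemma within_to_at:
  fixes f :: "real \<Rightarrow> real"
  assumes "is_interval I" "a \<in> I" "b \<in> I" "a < x" "x < b"
    and "(f has_real_derivative D) (at x within I)"
  shows "(f has_real_derivative D) (at x)"
proof -
  have sub: "{a<..<b} \<subseteq> I" using ivl_sub[OF assms(1-3)] greaterThanLessThan_subseteq_atLeastAtMost_iff by blast
  have "(f has_real_derivative D) (at x within {a<..<b})"
    using has_field_derivative_subset[OF assms(6) sub] .
  thus ?thesis using at_within_open[of x "{a<..<b}"] assms(4,5) by simp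
qed

lemma div_cancel_helper:
  fixes a b s :: real
  assumes "s \<noteq> 0"
  shows "(a / s) / (b / s) = a / b"
  using assms by (cases "b = 0") (simp_all add: field_simps)

theorem proposition4:
  fixes v h1 h2 :: "real \<Rightarrow> real" and \<phi>0 :: real and U I1 I2 :: "real set"
  assumes "open U" and "{\<phi>0..} \<subseteq> U" and "smooth_on U v"
    and "\<And>\<phi>. \<phi> \<ge> \<phi>0 \<Longrightarrow> v \<phi> > 0"
    and "\<And>\<phi>. \<phi> \<ge> \<phi>0 \<Longrightarrow> deriv v \<phi> > 0"
    and "is_interval I1" and "\<phi>0 \<in> I1" and "I1 \<subseteq> {\<phi>0..}"
    and "is_interval I2" and "\<phi>0 \<in> I2" and "I2 \<subseteq> {\<phi>0..}"
    and "\<And>\<phi>. \<phi> \<in> I1 \<Longrightarrow> h1 \<phi> > sqrt (v \<phi>) \<and>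
            (h1 has_real_derivative sqrt ((h1 \<phi>)\<^sup>2 - v \<phi>)) (at \<phi> within I1)"
    and "\<And>\<phi>. \<phi> \<in> I2 \<Longrightarrow> h2 \<phi> > sqrt (v \<phi>) \<and>
            (h2 has_real_derivative sqrt ((h2 \<phi>)\<^sup>2 - v \<phi>)) (at \<phi> within I2)"
    and "h2 \<phi>0 > h1 \<phi>0"
  shows "(\<forall>\<phi> \<in> I1 \<inter> I2. h2 \<phi> / sqrt (v \<phi>) > h1 \<phi> / sqrt (v \<phi>))
       \<and> (\<forall>\<phi> \<in> I1 \<inter> I2. \<forall>\<phi>' \<in> I1 \<inter> I2. \<phi> > \<phi>' \<and> \<phi>' > \<phi>0 \<longrightarrow>
            (h2 \<phi> / sqrt (v \<phi>)) / (h1 \<phi> / sqrt (v \<phi>))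
              > (h2 \<phi>' / sqrt (v \<phi>')) / (h1 \<phi>' / sqrt (v \<phi>')))"
proof -
  define I where "I = I1 \<inter> I2"
  have Iint: "is_interval I" unfolding I_def using assms(6,9) is_interval_Int by blast
  have p0: "\<phi>0 \<in> I" unfolding I_def using assms(7,10) by blast
  have Ige: "x \<ge> \<phi>0" if "x \<in> I" for x using that assms(8) unfolding I_def by auto
  have vpos: "v x > 0" if "x \<in> I" for x using Ige[OF that] assms(4) by blast
  have h1I: "h1 x > sqrt (v x) \<and> (h1 has_real_derivative sqrt ((h1 x)\<^sup>2 - v x)) (at x within I)"
    if "x \<in> I" for x
  proof -
    from that have x1: "x \<in> I1" unfolding I_def by simp
    have s: "I \<subseteq> I1" unfolding I_def by simp
    from assms(12)[OF x1] show ?thesis using has_field_derivative_subset[OF _ s] by blast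
  qed
  have h2I: "h2 x > sqrt (v x) \<and> (h2 has_real_derivative sqrt ((h2 x)\<^sup>2 - v x)) (at x within I)"
    if "x \<in> I" for x
  proof -
    from that have x1: "x \<in> I2" unfolding I_def by simp
    have s: "I \<subseteq> I2" unfolding I_def by simp
    from assms(13)[OF x1] show ?thesis using has_field_derivative_subset[OF _ s] by blast
  qed
  have h1pos: "h1 x > 0" if "x \<in> I" for x
  proof -
    have "sqrt (v x) \<ge> 0" by (rule real_sqrt_ge_zero) (use vpos[OF that] in simp)
    thus ?thesis using conjunct1[OF h1I[OF that]] by linarith
  qed
  have cont1: "continuous_on I h1"
    unfolding continuous_on_eq_continuous_within
  proof
    fix x assume "x \<in> I"
    from conjunct2[OF h1I[OF this]] show "continuous (at x within I) h1" by (rule DERIV_continuous)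
  qed
  have cont2: "continuous_on I h2"
    unfolding continuous_on_eq_continuous_within
  proof
    fix x assume "x \<in> I"
    from conjunct2[OF h2I[OF this]] show "continuous (at x within I) h2" by (rule DERIV_continuous)
  qed
  define R where "R = (\<lambda>x. h2 x / h1 x)"
  have Rder: "(R has_real_derivative
      (sqrt ((h2 x)\<^sup>2 - v x) * h1 x - h2 x * sqrt ((h1 x)\<^sup>2 - v x)) / (h1 x * h1 x)) (at x within I)"
    if "x \<in> I" for x
    unfolding R_def
    by (rule DERIV_divide[OF conjunct2[OF h2I[OF that]] conjunct2[OF h1I[OF that]]])
       (use h1pos[OF that] in simp)
  have Rpos: "(sqrt ((h2 x)\<^sup>2 - v x) * h1 x - h2 x * sqrt ((h1 x)\<^sup>2 - v x)) / (h1 x * h1 x) > 0"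
    if "x \<in> I" "h2 x > h1 x" for x
    using key_ineq[of "v x" "h1 x" "h2 x"] vpos[OF that(1)] h1I[OF that(1)] h2I[OF that(1)] that(2)
      h1pos[OF that(1)] by simp
  have contR: "continuous_on I R"
    unfolding R_def by (intro continuous_on_divide cont1 cont2) (metis h1pos less_irrefl)
  have incr: "R a < R b" if "a \<in> I" "b \<in> I" "a < b" "\<And>x. a \<le> x \<Longrightarrow> x < b \<Longrightarrow> h2 x > h1 x" for a b
  proof (rule DERIV_pos_imp_increasing_open[OF that(3)])
    have sub: "{a..b} \<subseteq> I" using ivl_sub[OF Iint that(1,2)] .
    show "continuous_on {a..b} R" using continuous_on_subset[OF contR sub] .
    fix x assume x: "a < x" "x < b"
    hence xI: "x \<in> I" using sub by auto
    have "h2 x > h1 x" using that(4) x by simp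
    with within_to_at[OF Iint that(1,2) x Rder[OF xI]] Rpos[OF xI]
    show "\<exists>y. (R has_real_derivative y) (at x) \<and> 0 < y" by blast
  qed
  have part1: "h2 x > h1 x" if xI: "x \<in> I" for x
  proof (rule ccontr)
    assume neg: "\<not> h2 x > h1 x"
    hence xne: "x \<noteq> \<phi>0" using assms(14) by auto
    hence xgt: "x > \<phi>0" using Ige[OF xI] by simp
    have sub: "{\<phi>0..x} \<subseteq> I" using ivl_sub[OF Iint p0 xI] .
    define Z where "Z = {y \<in> {\<phi>0..x}. h2 y \<le> h1 y}"
    have Zc: "closed Z" unfolding Z_def
      by (rule continuous_on_closed_Collect_le)
         (auto intro: continuous_on_subset[OF cont1 sub] continuous_on_subset[OF cont2 sub])
    have Zne: "Z \<noteq> {}" unfolding Z_def using neg xgt by auto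
    have Zb: "bdd_below Z" unfolding Z_def by (auto intro: bdd_belowI[of _ \<phi>0])
    define c where "c = Inf Z"
    have cZ: "c \<in> Z" unfolding c_def using closed_contains_Inf[OF Zne Zb Zc] .
    hence cI: "c \<in> I" and c1: "h2 c \<le> h1 c" and cge: "c \<ge> \<phi>0" using sub unfolding Z_def by auto
    have cgt: "c > \<phi>0" using cge c1 assms(14) by (cases "c = \<phi>0") auto
    have below: "h2 y > h1 y" if "\<phi>0 \<le> y" "y < c" for y
    proof (rule ccontr)
      assume "\<not> h2 y > h1 y"
      hence "y \<in> Z" unfolding Z_def using that cZ unfolding Z_def by auto
      hence "c \<le> y" unfolding c_def using cInf_lower[OF _ Zb] by blast
      thus False using that by simp
    qed
    have "R \<phi>0 < R c" using incr[OF p0 cI cgt below] by blast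
    moreover have "R \<phi>0 > 1" unfolding R_def using assms(14) h1pos[OF p0] by simp
    moreover have "R c \<le> 1" unfolding R_def using c1 h1pos[OF cI] by simp
    ultimately show False by simp
  qed
  have eqR: "(h2 x / sqrt (v x)) / (h1 x / sqrt (v x)) = R x" if "x \<in> I" for x
  proof -
    have "sqrt (v x) \<noteq> 0" using vpos[OF that] by simp
    thus ?thesis unfolding R_def by (rule div_cancel_helper)
  qed
  show ?thesis
  proof (intro conjI ballI impI)
    fix x assume "x \<in> I1 \<inter> I2"
    hence xI: "x \<in> I" unfolding I_def .
    have "sqrt (v x) > 0" using vpos[OF xI] by simp
    with part1[OF xI] show "h2 x / sqrt (v x) > h1 x / sqrt (v x)"
      by (rule divide_strict_right_mono)
  next
    fix x y assume "x \<in> I1 \<inter> I2" "y \<in> I1 \<inter> I2" and xy: "x > y \<and> y > \<phi>0"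
    hence xI: "x \<in> I" and yI: "y \<in> I" unfolding I_def by auto
    have zI: "z \<in> I" if "y \<le> z" "z < x" for z
      using ivl_sub[OF Iint yI xI] that by auto
    have "R y < R x"
    proof (rule incr[OF yI xI])
      show "y < x" using xy by simp
      fix z assume "y \<le> z" "z < x"
      thus "h2 z > h1 z" using part1 zI by blast
    qed
    moreover note eqR[OF xI] eqR[OF yI]
    ultimately show "(h2 x / sqrt (v x)) / (h1 x / sqrt (v x)) > (h2 y / sqrt (v y)) / (h1 y / sqrt (v y))"
      by (simp only:)
  qed
qed

end
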